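(* There is a PCR/$\mathbb{Q}$ refutation of $Q_n$ of degree $2$ and monomial-size polynomial in $n$.
   Context: For each $i\in[n]$ and $j\in[2n]$ there is a pair of twin variables $x_{ij},\bar x_{ij}$. Let $\mathrm{ks}_i=\sum_{j\in[2n]}x_{ij}-n$. $Q_n$ is the set of constraints: (I) $\mathrm{ks}_1=1/2$; (II) $\mathrm{ks}_i^2=\mathrm{ks}_{i+1}$ for each $i\in[n-1]$; (III) $\mathrm{ks}_n^2=0$ (each written as polynomial $=0$). A PCR/$\mathbb{Q}$ proof of $p=0$ from $Q$ is a sequence $p_1,\dots,p_\ell=p$ where each $p_i$ is an element of $Q$, a logical axiom $x^2-x$ or $x+\bar x-1$ for a twin pair, a product $xp_j$ of an earlier $p_j$ with a variable $x$, or a combination $ap_j+bp_k$ of earlier lines with $a,b\in\mathbb{Q}$. A refutation is a proof of $1=0$. Its degree is the max degree of the $p_i$, and its monomial-size is the total number of monomials (with multiplicity) over all $p_i$. *)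

theory Defs
  imports Complex_Main "HOL-Library.Poly_Mapping"
begin

datatype var = X nat nat | Xb nat nat

type_synonym mono = "var \<Rightarrow>\<^sub>0 nat"
type_synonym rpoly = "mono \<Rightarrow>\<^sub>0 rat"

definition Var :: "var \<Rightarrow> rpoly" where
  "Var v = Poly_Mapping.single (Poly_Mapping.single v 1) 1"

definition Const :: "rat \<Rightarrow> rpoly" where
  "Const c = Poly_Mapping.single 0 c"

text \<open>Total degree of a monomial and of a polynomial (zero polynomial has degree 0).\<close>
definition mono_deg :: "mono \<Rightarrow> nat" where
  "mono_deg m = (\<Sum>v\<in>Poly_Mapping.keys m. Poly_Mapping.lookup m v)"

definition pdeg :: "rpoly \<Rightarrow> nat" where
  "pdeg p = (if Poly_Mapping.keys p = {} then 0 else Max (mono_deg ` Poly_Mapping.keys p))"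

definition nmonos :: "rpoly \<Rightarrow> nat" where
  "nmonos p = card (Poly_Mapping.keys p)"

definition vars :: "nat \<Rightarrow> var set" where
  "vars n = {X i j | i j. i \<in> {1..n} \<and> j \<in> {1..2*n}} \<union> {Xb i j | i j. i \<in> {1..n} \<and> j \<in> {1..2*n}}"

definition ks :: "nat \<Rightarrow> nat \<Rightarrow> rpoly" where
  "ks n i = (\<Sum>j\<in>{1..2*n}. Var (X i j)) - Const (of_nat n)"

text \<open>The constraints of Q_n, each written as a polynomial (meaning polynomial = 0).\<close>
definition Qn :: "nat \<Rightarrow> rpoly set" where
  "Qn n = {ks n 1 - Const (1/2)}
        \<union> {(ks n i)^2 - ks n (i+1) | i. i \<in> {1..n-1}}
        \<union> {(ks n n)^2}"

definition log_axioms :: "var set \<Rightarrow> rpoly set" where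
  "log_axioms V = {(Var v)^2 - Var v | v. v \<in> V}
     \<union> {Var (X i j) + Var (Xb i j) - 1 | i j. X i j \<in> V \<and> Xb i j \<in> V}"

definition pcr_step :: "rpoly set \<Rightarrow> var set \<Rightarrow> rpoly list \<Rightarrow> rpoly \<Rightarrow> bool" where
  "pcr_step Q V ps p \<longleftrightarrow>
     p \<in> Q \<or> p \<in> log_axioms V
     \<or> (\<exists>v\<in>V. \<exists>q\<in>set ps. p = Var v * q)
     \<or> (\<exists>a b :: rat. \<exists>q\<in>set ps. \<exists>r\<in>set ps. p = Const a * q + Const b * r)"

definition pcr_proof :: "rpoly set \<Rightarrow> var set \<Rightarrow> rpoly list \<Rightarrow> bool" where
  "pcr_proof Q V ps \<longleftrightarrow> (\<forall>k<length ps. pcr_step Q V (take k ps) (ps ! k))"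

definition pcr_refutation :: "rpoly set \<Rightarrow> var set \<Rightarrow> rpoly list \<Rightarrow> bool" where
  "pcr_refutation Q V ps \<longleftrightarrow> ps \<noteq> [] \<and> pcr_proof Q V ps \<and> last ps = 1"

definition proof_degree :: "rpoly list \<Rightarrow> nat" where
  "proof_degree ps = foldr (\<lambda>p d. max (pdeg p) d) ps 0"

definition monomial_size :: "rpoly list \<Rightarrow> nat" where
  "monomial_size ps = (\<Sum>p\<leftarrow>ps. nmonos p)"

end

theory Submission
  imports Defs
begin

definition M1 :: "var set \<Rightarrow> mono set" where
  "M1 V = insert 0 ((\<lambda>v. Poly_Mapping.single v 1) ` V)"

definition M2 :: "var set \<Rightarrow> mono set" where
  "M2 V = (\<lambda>(a,b). a + b) ` (M1 V \<times> M1 V)"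

lemma M1_M2: "M1 V \<subseteq> M2 V"
  unfolding M2_def M1_def by (force intro: image_eqI[where x="(_, 0)"])

lemma Const_add: "Const (a + b) = Const a + Const b"
  by (simp add: Const_def Poly_Mapping.single_add)
lemma Const_mult: "Const (a * b) = Const a * Const b"
  by (simp add: Const_def mult_single)
lemma Const_one: "Const 1 = 1"
  by (simp add: Const_def)
lemma Const_diff: "Const (a - b) = Const a - Const b"
  by (simp add: Const_def Poly_Mapping.single_diff)
lemma Const_of_nat: "Const (of_nat n) = of_nat n"
  by (simp add: Const_def single_of_nat)

lemma keys_Var: "Poly_Mapping.keys (Var v) = {Poly_Mapping.single v 1}"
  by (simp add: Var_def)
lemma keys_Const: "Poly_Mapping.keys (Const c) \<subseteq> {0}"
  by (simp add: Const_def)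

lemma keys_Const_mult: "Poly_Mapping.keys (Const a * q) \<subseteq> Poly_Mapping.keys q"
proof
  fix x assume "x \<in> Poly_Mapping.keys (Const a * q)"
  then obtain aa b where "x = aa + b" "aa \<in> Poly_Mapping.keys (Const a)" "b \<in> Poly_Mapping.keys q"
    using keys_mult[of "Const a" q] by blast
  then show "x \<in> Poly_Mapping.keys q" using keys_Const[of a] by auto
qed

lemma keys_Var_mult: "v \<in> V \<Longrightarrow> Poly_Mapping.keys q \<subseteq> M1 V \<Longrightarrow> Poly_Mapping.keys (Var v * q) \<subseteq> M2 V"
proof
  fix x assume v: "v \<in> V" and q: "Poly_Mapping.keys q \<subseteq> M1 V" and "x \<in> Poly_Mapping.keys (Var v * q)"
  then obtain aa b where "x = aa + b" "aa \<in> Poly_Mapping.keys (Var v)" "b \<in> Poly_Mapping.keys q"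
    using keys_mult[of "Var v" q] by blast
  moreover have "aa \<in> M1 V" using calculation(2) v by (simp add: keys_Var M1_def)
  ultimately show "x \<in> M2 V" using q unfolding M2_def by blast
qed

lemma keys_sq: "Poly_Mapping.keys q \<subseteq> M1 V \<Longrightarrow> Poly_Mapping.keys (q^2) \<subseteq> M2 V"
proof
  fix x assume q: "Poly_Mapping.keys q \<subseteq> M1 V" and "x \<in> Poly_Mapping.keys (q^2)"
  then obtain aa b where "x = aa + b" "aa \<in> Poly_Mapping.keys q" "b \<in> Poly_Mapping.keys q"
    using keys_mult[of q q] unfolding power2_eq_square by blast
  then show "x \<in> M2 V" using q unfolding M2_def by blast
qed

lemma keys_ks: "1 \<le> i \<Longrightarrow> i \<le> n \<Longrightarrow> Poly_Mapping.keys (ks n i) \<subseteq> M1 (vars n)"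
proof -
  assume a: "1 \<le> i" "i \<le> n"
  have xin: "X i j \<in> vars n" if "j \<in> {1..2*n}" for j
  proof -
    have "i \<in> {1..n}" using a by auto
    then show ?thesis using that unfolding vars_def by blast
  qed
  have "Poly_Mapping.keys (Var (X i j)) \<subseteq> M1 (vars n)" if "j \<in> {1..2*n}" for j
    using xin[OF that] by (simp add: keys_Var M1_def)
  then have k1: "Poly_Mapping.keys (\<Sum>j\<in>{1..2*n}. Var (X i j)) \<subseteq> M1 (vars n)"
    by (intro order_trans[OF keys_sum] UN_least)
  have k2: "Poly_Mapping.keys (Const (of_nat n)) \<subseteq> M1 (vars n)"
    using keys_Const[of "of_nat n"] by (auto simp: M1_def)
  show ?thesis unfolding ks_def by (rule order_trans[OF keys_diff]) (use k1 k2 in blast)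
qed

lemma keys_ksc: "1 \<le> i \<Longrightarrow> i \<le> n \<Longrightarrow> Poly_Mapping.keys (ks n i - Const c) \<subseteq> M1 (vars n)"
  using keys_ks[of i n] keys_diff[of "ks n i" "Const c"] keys_Const[of c]
  by (auto simp: M1_def)

lemma mono_deg_superset:
  assumes "finite S" "Poly_Mapping.keys m \<subseteq> S"
  shows "mono_deg m = sum (Poly_Mapping.lookup m) S"
  unfolding mono_deg_def
  by (rule sum.mono_neutral_left) (use assms in \<open>auto simp: in_keys_iff\<close>)

lemma mono_deg_add: "mono_deg (a + b) = mono_deg a + mono_deg b"
proof -
  let ?S = "Poly_Mapping.keys a \<union> Poly_Mapping.keys b"
  have "mono_deg (a+b) = sum (Poly_Mapping.lookup (a+b)) ?S"
    using keys_add[of a b] by (intro mono_deg_superset) auto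
  also have "\<dots> = sum (Poly_Mapping.lookup a) ?S + sum (Poly_Mapping.lookup b) ?S"
    by (simp add: lookup_add sum.distrib)
  also have "\<dots> = mono_deg a + mono_deg b"
    by (subst (1 2) mono_deg_superset[symmetric]) auto
  finally show ?thesis .
qed

lemma mono_deg_single: "mono_deg (Poly_Mapping.single v 1) = 1"
  by (simp add: mono_deg_def)
lemma mono_deg_0: "mono_deg 0 = 0"
  by (simp add: mono_deg_def)

lemma M1_deg: "m \<in> M1 V \<Longrightarrow> mono_deg m \<le> 1"
  using mono_deg_single by (auto simp: M1_def mono_deg_0)

lemma M2_deg: "m \<in> M2 V \<Longrightarrow> mono_deg m \<le> 2"
proof -
  assume "m \<in> M2 V"
  then obtain a b where "m = a + b" "a \<in> M1 V" "b \<in> M1 V" unfolding M2_def by auto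
  then show ?thesis using M1_deg[of a V] M1_deg[of b V] by (simp add: mono_deg_add)
qed

lemma pdeg_M2: "Poly_Mapping.keys p \<subseteq> M2 V \<Longrightarrow> pdeg p \<le> 2"
  unfolding pdeg_def using M2_deg by auto


lemma pcr_step_mono: "set ps \<subseteq> set ps' \<Longrightarrow> pcr_step Q V ps p \<Longrightarrow> pcr_step Q V ps' p"
  unfolding pcr_step_def by blast

lemma pcr_proof_snoc: "pcr_proof Q V ps \<Longrightarrow> pcr_step Q V ps p \<Longrightarrow> pcr_proof Q V (ps @ [p])"
  unfolding pcr_proof_def
proof (intro allI impI)
  fix k assume h: "\<forall>k<length ps. pcr_step Q V (take k ps) (ps ! k)" "pcr_step Q V ps p"
    and k: "k < length (ps @ [p])"
  show "pcr_step Q V (take k (ps @ [p])) ((ps @ [p]) ! k)"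
  proof (cases "k < length ps")
    case True then show ?thesis using h(1) by (simp add: nth_append)
  next
    case False then have "k = length ps" using k by simp
    then show ?thesis using h(2) by simp
  qed
qed

lemma pcr_proof_app: "pcr_proof Q V ps \<Longrightarrow> \<forall>p\<in>set qs. pcr_step Q V ps p \<Longrightarrow> pcr_proof Q V (ps @ qs)"
proof (induction qs rule: rev_induct)
  case Nil then show ?case by simp
next
  case (snoc x xs)
  have "\<forall>p\<in>set xs. pcr_step Q V ps p" using snoc.prems(2) by simp
  then have "pcr_proof Q V (ps @ xs)" by (rule snoc.IH[OF snoc.prems(1)])
  moreover have "pcr_step Q V (ps @ xs) x"
    using pcr_step_mono[of ps "ps @ xs" Q V x] snoc.prems(2) by simp
  ultimately show ?case using pcr_proof_snoc[of Q V "ps @ xs" x] by simp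
qed

lemma pcr_proof_nil: "pcr_proof Q V []"
  by (simp add: pcr_proof_def)

lemma lincomb:
  assumes "pcr_proof Q V ps" "Lst \<noteq> []" "\<forall>x\<in>set Lst. snd x \<in> set ps"
  shows "\<exists>qs. pcr_proof Q V (ps @ qs) \<and> length qs = length Lst
     \<and> (\<forall>p\<in>set qs. Poly_Mapping.keys p \<subseteq> (\<Union>x\<in>set Lst. Poly_Mapping.keys (snd x)))
     \<and> sum_list (map (\<lambda>x. Const (fst x) * snd x) Lst) \<in> set qs"
  using assms(2,3)
proof (induction Lst rule: rev_induct)
  case Nil then show ?case by simp
next
  case (snoc x xs)
  obtain a q where x: "x = (a, q)" by (cases x)
  have q: "q \<in> set ps" using snoc.prems x by auto
  show ?case
  proof (cases "xs = []")
    case True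
    let ?p = "Const a * q + Const 0 * q"
    have "\<exists>a' b' :: rat. \<exists>q'\<in>set ps. \<exists>r\<in>set ps. ?p = Const a' * q' + Const b' * r"
      using q by blast
    then have "pcr_step Q V ps ?p" unfolding pcr_step_def by blast
    then have pp: "pcr_proof Q V (ps @ [?p])" using pcr_proof_snoc assms(1) by blast
    have c0: "Const 0 = 0" by (simp add: Const_def)
    have e: "?p = Const a * q" by (simp add: c0)
    have kk: "\<forall>p\<in>set [?p]. Poly_Mapping.keys p \<subseteq> (\<Union>x\<in>set (xs @ [x]). Poly_Mapping.keys (snd x))"
      using keys_Const_mult[of a q] x unfolding e by (simp; blast)
    have ll: "length [?p] = length (xs @ [x])" using True by simp
    have mm: "sum_list (map (\<lambda>x. Const (fst x) * snd x) (xs @ [x])) \<in> set [?p]"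
      using True x e by simp
    show ?thesis
      by (rule exI[of _ "[?p]"]) (intro conjI pp ll kk mm)
  next
    case False
    then obtain qs where qs: "pcr_proof Q V (ps @ qs)" "length qs = length xs"
      "\<forall>p\<in>set qs. Poly_Mapping.keys p \<subseteq> (\<Union>x\<in>set xs. Poly_Mapping.keys (snd x))"
      "sum_list (map (\<lambda>x. Const (fst x) * snd x) xs) \<in> set qs"
      using snoc by auto
    let ?s = "sum_list (map (\<lambda>x. Const (fst x) * snd x) xs)"
    let ?p = "Const 1 * ?s + Const a * q"
    have "\<exists>a' b' :: rat. \<exists>q'\<in>set (ps @ qs). \<exists>r\<in>set (ps @ qs). ?p = Const a' * q' + Const b' * r"
      using q qs(4) by (intro exI[of _ 1] exI[of _ a] bexI[of _ ?s] bexI[of _ q]) auto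
    then have "pcr_step Q V (ps @ qs) ?p" unfolding pcr_step_def by blast
    then have pp: "pcr_proof Q V (ps @ qs @ [?p])" using pcr_proof_snoc[OF qs(1)] by simp
    have kp: "Poly_Mapping.keys ?p \<subseteq> (\<Union>x\<in>set (xs @ [x]). Poly_Mapping.keys (snd x))"
    proof -
      have "Poly_Mapping.keys ?s \<subseteq> (\<Union>x\<in>set xs. Poly_Mapping.keys (snd x))" using qs(3,4) by blast
      moreover have "Poly_Mapping.keys (Const a * q) \<subseteq> Poly_Mapping.keys q" by (rule keys_Const_mult)
      ultimately show ?thesis using keys_add[of "Const 1 * ?s" "Const a * q"] x
        by (auto simp: Const_one)
    qed
    have e: "?p = sum_list (map (\<lambda>x. Const (fst x) * snd x) (xs @ [x]))"
      using x by (simp add: Const_one)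
    have kk: "\<forall>p\<in>set (qs @ [?p]). Poly_Mapping.keys p \<subseteq> (\<Union>x\<in>set (xs @ [x]). Poly_Mapping.keys (snd x))"
    proof
      fix p assume "p \<in> set (qs @ [?p])"
      then consider "p \<in> set qs" | "p = ?p" by auto
      then show "Poly_Mapping.keys p \<subseteq> (\<Union>x\<in>set (xs @ [x]). Poly_Mapping.keys (snd x))"
      proof cases
        case 1 then show ?thesis using qs(3) by fastforce
      next
        case 2 then show ?thesis using kp by simp
      qed
    qed
    have ll: "length (qs @ [?p]) = length (xs @ [x])" using qs(2) by simp
    have mm: "sum_list (map (\<lambda>x. Const (fst x) * snd x) (xs @ [x])) \<in> set (qs @ [?p])"
      unfolding e[symmetric] by simp
    show ?thesis
      by (rule exI[of _ "qs @ [?p]"]) (intro conjI pp ll kk mm)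
  qed
qed


lemma sq_ident:
  "(\<Sum>j\<in>{1..2*n}. Var (X i j) * (ks n i - Const c)) + Const (c - of_nat n) * (ks n i - Const c)
   = (ks n i)^2 - Const (c^2)"
proof -
  define S where "S = (\<Sum>j\<in>{1..2*n}. Var (X i j))"
  have k: "ks n i = S - of_nat n" unfolding ks_def S_def Const_of_nat ..
  have "(\<Sum>j\<in>{1..2*n}. Var (X i j) * (ks n i - Const c)) = S * (ks n i - Const c)"
    unfolding S_def by (simp add: sum_distrib_right)
  moreover have "Const (c - of_nat n) = Const c - of_nat n" by (simp add: Const_diff Const_of_nat)
  moreover have "Const (c^2) = Const c * Const c" by (simp add: power2_eq_square Const_mult)
  moreover have "\<And>S N C :: rpoly. S*((S-N)-C) + (C - N)*((S-N)-C) = (S-N)^2 - C*C"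
    by (simp add: power2_eq_square algebra_simps)
  ultimately show ?thesis unfolding k by metis
qed

lemma sq_block:
  assumes ps: "pcr_proof (Qn n) (vars n) ps" and L: "ks n i - Const c \<in> set ps"
    and i: "1 \<le> i" "i \<le> n"
  shows "\<exists>qs. pcr_proof (Qn n) (vars n) (ps @ qs) \<and> (\<forall>p\<in>set qs. Poly_Mapping.keys p \<subseteq> M2 (vars n))
     \<and> length qs = 4*n+1 \<and> (ks n i)^2 - Const (c^2) \<in> set qs"
proof -
  let ?L = "ks n i - Const c"
  define prods where "prods = map (\<lambda>j. Var (X i j) * ?L) [1..<2*n+1]"
  have sp: "set prods = (\<lambda>j. Var (X i j) * ?L) ` {1..2*n}"
  proof -
    have "set [1..<2*n+1] = {1..2*n}" by auto
    then show ?thesis unfolding prods_def set_map by simp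
  qed
  have xin: "X i j \<in> vars n" if "j \<in> {1..2*n}" for j
  proof -
    have "i \<in> {1..n}" using i by auto
    then show ?thesis using that unfolding vars_def by blast
  qed
  have kL: "Poly_Mapping.keys ?L \<subseteq> M1 (vars n)" using keys_ksc[OF i] .
  have "\<forall>p\<in>set prods. pcr_step (Qn n) (vars n) ps p"
  proof
    fix p assume "p \<in> set prods"
    then obtain j where j: "j \<in> {1..2*n}" "p = Var (X i j) * ?L" unfolding sp by blast
    then show "pcr_step (Qn n) (vars n) ps p" unfolding pcr_step_def using xin[OF j(1)] L by blast
  qed
  then have pp: "pcr_proof (Qn n) (vars n) (ps @ prods)" using pcr_proof_app[OF ps] by blast
  have kp: "\<forall>p\<in>set prods. Poly_Mapping.keys p \<subseteq> M2 (vars n)"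
  proof
    fix p assume "p \<in> set prods"
    then obtain j where j: "j \<in> {1..2*n}" "p = Var (X i j) * ?L" unfolding sp by blast
    then show "Poly_Mapping.keys p \<subseteq> M2 (vars n)" using keys_Var_mult[OF xin[OF j(1)] kL] by simp
  qed
  define Lst where "Lst = map (\<lambda>p. (1::rat, p)) prods @ [(c - of_nat n, ?L)]"
  have l1: "\<forall>x\<in>set Lst. snd x \<in> set (ps @ prods)" unfolding Lst_def using L by auto
  have l2: "Lst \<noteq> []" unfolding Lst_def by simp
  obtain qs where qs: "pcr_proof (Qn n) (vars n) (ps @ prods @ qs)" "length qs = length Lst"
     "\<forall>p\<in>set qs. Poly_Mapping.keys p \<subseteq> (\<Union>x\<in>set Lst. Poly_Mapping.keys (snd x))"
     "sum_list (map (\<lambda>x. Const (fst x) * snd x) Lst) \<in> set qs"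
    using lincomb[OF pp l2 l1] by auto
  have "(\<Union>x\<in>set Lst. Poly_Mapping.keys (snd x)) \<subseteq> M2 (vars n)"
    unfolding Lst_def using kp kL M1_M2 by auto
  then have kq: "\<forall>p\<in>set qs. Poly_Mapping.keys p \<subseteq> M2 (vars n)" using qs(3) by blast
  have "sum_list (map (\<lambda>x. Const (fst x) * snd x) Lst)
     = sum_list prods + Const (c - of_nat n) * ?L"
    unfolding Lst_def by (simp add: Const_one o_def)
  also have "sum_list prods = (\<Sum>j\<in>{1..2*n}. Var (X i j) * ?L)"
  proof -
    have "sum_list prods = (\<Sum>j\<in>set [1..<2*n+1]. Var (X i j) * ?L)"
      unfolding prods_def by (rule sum_set_upt_conv_sum_list_nat[symmetric])
    also have "set [1..<2*n+1] = {1..2*n}" by auto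
    finally show ?thesis .
  qed
  finally have "sum_list (map (\<lambda>x. Const (fst x) * snd x) Lst) = (ks n i)^2 - Const (c^2)"
    using sq_ident by simp
  then have m: "(ks n i)^2 - Const (c^2) \<in> set (prods @ qs)" using qs(4) by simp
  have "length (prods @ qs) = 4*n+1" using qs(2) unfolding Lst_def prods_def by simp
  then show ?thesis using qs(1) kp kq m by (intro exI[of _ "prods @ qs"]) auto
qed


lemma level:
  "1 \<le> i \<Longrightarrow> i \<le> n \<Longrightarrow> \<exists>ps. pcr_proof (Qn n) (vars n) ps
     \<and> (\<forall>p\<in>set ps. Poly_Mapping.keys p \<subseteq> M2 (vars n))
     \<and> length ps \<le> (4*n+4)*i \<and> ks n i - Const ((1/2)^(2^(i-1))) \<in> set ps"
proof (induction i)
  case 0 then show ?case by simp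
next
  case (Suc i)
  show ?case
  proof (cases "i = 0")
    case True
    let ?p = "ks n 1 - Const (1/2)"
    have q: "?p \<in> Qn n" unfolding Qn_def by simp
    then have "pcr_step (Qn n) (vars n) [] ?p" unfolding pcr_step_def by blast
    then have pp: "pcr_proof (Qn n) (vars n) [?p]" using pcr_proof_snoc[OF pcr_proof_nil] by fastforce
    have "Poly_Mapping.keys ?p \<subseteq> M2 (vars n)" using keys_ksc[of 1 n] Suc.prems M1_M2 by auto
    then show ?thesis using True pp by (intro exI[of _ "[?p]"]) auto
  next
    case False
    then have i: "1 \<le> i" "i \<le> n" "i < n" using Suc.prems by auto
    define c :: rat where "c = (1/2)^(2^(i-1))"
    obtain ps where ps: "pcr_proof (Qn n) (vars n) ps" "\<forall>p\<in>set ps. Poly_Mapping.keys p \<subseteq> M2 (vars n)"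
      "length ps \<le> (4*n+4)*i" "ks n i - Const c \<in> set ps"
      using Suc.IH i unfolding c_def by blast
    obtain qs where qs: "pcr_proof (Qn n) (vars n) (ps @ qs)" "\<forall>p\<in>set qs. Poly_Mapping.keys p \<subseteq> M2 (vars n)"
      "length qs = 4*n+1" "(ks n i)^2 - Const (c^2) \<in> set qs"
      using sq_block[OF ps(1) ps(4) i(1,2)] by blast
    let ?A = "(ks n i)^2 - ks n (i+1)"
    let ?N = "Const 1 * ((ks n i)^2 - Const (c^2)) + Const (-1) * ?A"
    have A: "?A \<in> Qn n" unfolding Qn_def using i by auto
    have s1: "pcr_step (Qn n) (vars n) (ps @ qs) ?A" using A unfolding pcr_step_def by blast
    have "\<exists>a' b' :: rat. \<exists>q'\<in>set ((ps @ qs) @ [?A]). \<exists>r\<in>set ((ps @ qs) @ [?A]). ?N = Const a' * q' + Const b' * r"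
      using qs(4) by (intro exI[of _ 1] exI[of _ "-1"] bexI[of _ "(ks n i)^2 - Const (c^2)"] bexI[of _ ?A]) auto
    then have s2: "pcr_step (Qn n) (vars n) ((ps @ qs) @ [?A]) ?N" unfolding pcr_step_def by blast
    have pp: "pcr_proof (Qn n) (vars n) (((ps @ qs) @ [?A]) @ [?N])"
      by (intro pcr_proof_snoc s2 s1 qs(1))
    have cm1: "Const (-1) = -1" by (simp add: Const_def single_uminus)
    have eN: "?N = ks n (Suc i) - Const (c^2)" by (simp add: Const_one cm1)
    have cc: "c^2 = (1/2)^(2^(Suc i - 1))"
    proof -
      have "c^2 = (1/2)^(2^(i-1)*2)" unfolding c_def by (simp add: power_mult)
      also have "2^(i-1)*2 = (2::nat)^i" using i(1) by (cases i) auto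
      finally show ?thesis by simp
    qed
    have k1: "Poly_Mapping.keys (ks n (i+1)) \<subseteq> M1 (vars n)" using keys_ks[of "i+1" n] i by simp
    have kA: "Poly_Mapping.keys ?A \<subseteq> M2 (vars n)"
      using keys_sq[OF keys_ks[OF i(1,2)]] k1 M1_M2[of "vars n"] keys_diff[of "(ks n i)^2" "ks n (i+1)"]
      by blast
    have kN: "Poly_Mapping.keys ?N \<subseteq> M2 (vars n)"
      unfolding eN using keys_ksc[of "Suc i" n "c^2"] Suc.prems M1_M2 by auto
    have "length (((ps @ qs) @ [?A]) @ [?N]) \<le> (4*n+4)*Suc i" using ps(3) qs(3) by simp
    moreover have "\<forall>p\<in>set (((ps @ qs) @ [?A]) @ [?N]). Poly_Mapping.keys p \<subseteq> M2 (vars n)"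
      using ps(2) qs(2) kA kN by auto
    moreover have "ks n (Suc i) - Const ((1/2)^(2^(Suc i - 1))) \<in> set (((ps @ qs) @ [?A]) @ [?N])"
      using eN cc by simp
    ultimately show ?thesis using pp by blast
  qed
qed


lemma vars_eq: "vars n = (\<lambda>(i,j). X i j) ` ({1..n} \<times> {1..2*n}) \<union> (\<lambda>(i,j). Xb i j) ` ({1..n} \<times> {1..2*n})"
  unfolding vars_def by auto

lemma vars_finite: "finite (vars n)"
  unfolding vars_eq by auto

lemma vars_card: "card (vars n) \<le> 4 * n^2"
proof -
  have "card (vars n) \<le> card ((\<lambda>(i,j). X i j) ` ({1..n} \<times> {1..2*n})) + card ((\<lambda>(i,j). Xb i j) ` ({1..n} \<times> {1..2*n}))"
    unfolding vars_eq by (rule card_Un_le)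
  also have "\<dots> \<le> card ({1..n} \<times> {1..2*n}) + card ({1..n} \<times> {1..2*n})"
    by (intro add_mono card_image_le) auto
  also have "\<dots> = 4 * n^2" by (simp add: card_cartesian_product power2_eq_square)
  finally show ?thesis .
qed

lemma M1_finite: "finite V \<Longrightarrow> finite (M1 V)" unfolding M1_def by auto
lemma M2_finite: "finite V \<Longrightarrow> finite (M2 V)" unfolding M2_def using M1_finite by auto

lemma M1_card: "finite V \<Longrightarrow> card (M1 V) \<le> card V + 1"
  unfolding M1_def using card_insert_le_m1 card_image_le
  by (metis (no_types, lifting) Suc_eq_plus1 Suc_le_mono card_insert_if finite_imageI le_SucI)

lemma M2_card: "finite V \<Longrightarrow> card (M2 V) \<le> (card V + 1)^2"
proof -
  assume f: "finite V"
  have "card (M2 V) \<le> card (M1 V \<times> M1 V)" unfolding M2_def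
    by (rule card_image_le) (simp add: M1_finite f)
  also have "\<dots> = card (M1 V) * card (M1 V)" by (simp add: card_cartesian_product)
  also have "\<dots> \<le> (card V + 1) * (card V + 1)" using M1_card[OF f] by (intro mult_mono) auto
  finally show ?thesis by (simp add: power2_eq_square)
qed

lemma proof_degree_le: "\<forall>p\<in>set ps. pdeg p \<le> 2 \<Longrightarrow> proof_degree ps \<le> 2"
  by (induction ps) (auto simp: proof_degree_def)

lemma msize_le: "\<forall>p\<in>set ps. nmonos p \<le> B \<Longrightarrow> monomial_size ps \<le> length ps * B"
  by (induction ps) (auto simp: monomial_size_def)

theorem lemma5:
  "\<exists>c k :: nat. \<forall>n\<ge>1. \<exists>ps. pcr_refutation (Qn n) (vars n) ps
      \<and> proof_degree ps \<le> 2 \<and> monomial_size ps \<le> c * n ^ k"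
proof -
  have "\<exists>ps. pcr_refutation (Qn n) (vars n) ps \<and> proof_degree ps \<le> 2 \<and> monomial_size ps \<le> 375 * n ^ 6"
    if n: "n \<ge> 1" for n :: nat
  proof -
  define c :: rat where "c = (1/2)^(2^(n-1))"
  obtain ps where ps: "pcr_proof (Qn n) (vars n) ps" "\<forall>p\<in>set ps. Poly_Mapping.keys p \<subseteq> M2 (vars n)"
      "length ps \<le> (4*n+4)*n" "ks n n - Const c \<in> set ps"
    using level[OF n order.refl] unfolding c_def by blast
  obtain qs where qs: "pcr_proof (Qn n) (vars n) (ps @ qs)" "\<forall>p\<in>set qs. Poly_Mapping.keys p \<subseteq> M2 (vars n)"
      "length qs = 4*n+1" "(ks n n)^2 - Const (c^2) \<in> set qs"
    using sq_block[OF ps(1) ps(4) n order.refl] by blast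
  let ?B = "(ks n n)^2"
  define d where "d = c^2"
  have d0: "d \<noteq> 0" unfolding d_def c_def by simp
  let ?N = "Const (1/d) * ?B + Const (-(1/d)) * ((ks n n)^2 - Const d)"
  have B: "?B \<in> Qn n" unfolding Qn_def by auto
  have s1: "pcr_step (Qn n) (vars n) (ps @ qs) ?B" using B unfolding pcr_step_def by blast
  have "\<exists>a' b' :: rat. \<exists>q'\<in>set ((ps @ qs) @ [?B]). \<exists>r\<in>set ((ps @ qs) @ [?B]). ?N = Const a' * q' + Const b' * r"
    using qs(4) unfolding d_def by (intro exI[of _ "1/d"] exI[of _ "-(1/d)"] bexI[of _ ?B] bexI[of _ "(ks n n)^2 - Const (c^2)"]) (auto simp: d_def)
  then have s2: "pcr_step (Qn n) (vars n) ((ps @ qs) @ [?B]) ?N" unfolding pcr_step_def by blast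
  have pp: "pcr_proof (Qn n) (vars n) (((ps @ qs) @ [?B]) @ [?N])"
    by (intro pcr_proof_snoc s2 s1 qs(1))
  have eN: "?N = 1"
  proof -
    have "?N = Const (1/d) * Const d" by (simp add: Const_diff[symmetric] Const_def single_uminus algebra_simps)
    also have "\<dots> = 1" using d0 by (simp add: Const_mult[symmetric] Const_one)
    finally show ?thesis .
  qed
  define R where "R = ((ps @ qs) @ [?B]) @ [?N]"
  have kB: "Poly_Mapping.keys ?B \<subseteq> M2 (vars n)" using keys_sq[OF keys_ks[OF n order.refl]] .
  have k1: "Poly_Mapping.keys (1::rpoly) \<subseteq> M2 (vars n)" using M1_M2 by (auto simp: M1_def)
  have kR: "\<forall>p\<in>set R. Poly_Mapping.keys p \<subseteq> M2 (vars n)"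
    unfolding R_def eN using ps(2) qs(2) kB k1 by auto
  have ref: "pcr_refutation (Qn n) (vars n) R"
    unfolding pcr_refutation_def R_def using pp eN by simp
  have deg: "proof_degree R \<le> 2" using kR pdeg_M2 by (intro proof_degree_le) blast
  have nm: "\<forall>p\<in>set R. nmonos p \<le> (4*n^2+1)^2"
  proof
    fix p assume "p \<in> set R"
    then have "Poly_Mapping.keys p \<subseteq> M2 (vars n)" using kR by blast
    then have "nmonos p \<le> card (M2 (vars n))" unfolding nmonos_def
      by (intro card_mono M2_finite vars_finite)
    also have "\<dots> \<le> (card (vars n) + 1)^2" by (rule M2_card[OF vars_finite])
    also have "\<dots> \<le> (4*n^2+1)^2" using vars_card by (intro power_mono) auto
    finally show "nmonos p \<le> (4*n^2+1)^2" .
  qed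
  have len: "length R \<le> 15 * n^2"
  proof -
    have "length R \<le> (4*n+4)*n + (4*n+1) + 2" unfolding R_def using ps(3) qs(3) by simp
    also have "\<dots> = 4*n^2 + 8*n + 3" by (simp add: algebra_simps power2_eq_square)
    also have "\<dots> \<le> 15*n^2"
    proof -
      have "n \<le> n^2" using n by (simp add: power2_eq_square)
      moreover have "1 \<le> n^2" using n by simp
      ultimately show ?thesis by linarith
    qed
    finally show ?thesis .
  qed
  have b2: "(4*n^2+1)^2 \<le> (5*n^2)^2"
  proof -
    have "1 \<le> n^2" using n by simp
    then show ?thesis by (intro power_mono) auto
  qed
  have "monomial_size R \<le> length R * (4*n^2+1)^2" by (rule msize_le[OF nm])
  also have "\<dots> \<le> (15*n^2) * (5*n^2)^2" using len b2 by (intro mult_mono) auto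
  also have "\<dots> = 375 * n^6" by (simp add: power_mult_distrib flip: power_mult)
  finally show "\<exists>ps. pcr_refutation (Qn n) (vars n) ps \<and> proof_degree ps \<le> 2 \<and> monomial_size ps \<le> 375 * n ^ 6"
    using ref deg by blast
  qed
  then show ?thesis by blast
qed

end
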